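(* Let $G$ be a $6$-regular graph, $\mathcal S$ a canonical path partition of $G$, and $P$ a path component with end-vertices $o_1,o_2$. Let $x_1,x_2\in V_2$ be path neighbors on $P$, with $x_1$ immediately preceding $x_2$ when $P$ is traversed from $o_1$ to $o_2$. If $x_1$ goes to a vertex of a cycle component $C$, then every vertex that $x_2$ goes to is either $o_2$ or a vertex of $C$.
   Context: All graphs are finite, simple and undirected. A path partition of $G=(V,E)$ is a set of vertex-disjoint paths (single vertices allowed) covering $V$; its members are components. A component with $t\ge3$ vertices is a cycle component if the subgraph induced on its vertex set has a spanning cycle; a one-vertex component is an isolated vertex; every other component is a path component. A path partition is canonical if (1) it has the minimum number of components among all path partitions of $G$; (2) among those, it has the maximum number of cycle components; (3) it has no isolated vertices. Given a canonical path partition $\mathcal S$ of $G$: two vertices are path neighbors if they are consecutive on a path component. An edge of $G$ is a free edge unless it joins two path neighbors or has both endpoints in the same cycle component. $V_1$ is the set of end-vertices of path components together with all vertices of cycle components. $V_2$ is the set of vertices not in $V_1$ that are joined by a free edge to a vertex of $V_1$. A balanced edge is a free edge with one endpoint in $V_1$ and the other in $V_2$; for $x\in V_2$, $y\in V_1$ we say $x$ goes to $y$ if $xy$ is a balanced edge. *)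

theory Defs
  imports Main
begin

definition simple_graph :: "'a set \<Rightarrow> ('a \<Rightarrow> 'a \<Rightarrow> bool) \<Rightarrow> bool" where
  "simple_graph V E \<longleftrightarrow> finite V \<and> (\<forall>x y. E x y \<longrightarrow> E y x) \<and> (\<forall>x. \<not> E x x)
     \<and> (\<forall>x y. E x y \<longrightarrow> x \<in> V \<and> y \<in> V)"

definition regular :: "nat \<Rightarrow> 'a set \<Rightarrow> ('a \<Rightarrow> 'a \<Rightarrow> bool) \<Rightarrow> bool" where
  "regular k V E \<longleftrightarrow> (\<forall>v\<in>V. card {u. E v u} = k)"

definition is_path :: "('a \<Rightarrow> 'a \<Rightarrow> bool) \<Rightarrow> 'a list \<Rightarrow> bool" where
  "is_path E p \<longleftrightarrow> p \<noteq> [] \<and> distinct p \<and> (\<forall>i. Suc i < length p \<longrightarrow> E (p ! i) (p ! Suc i))"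

text \<open>A path partition: a set of vertex-disjoint paths covering V.  Each component
  is represented by one list (one of its two traversal orders).\<close>
definition path_partition :: "'a set \<Rightarrow> ('a \<Rightarrow> 'a \<Rightarrow> bool) \<Rightarrow> 'a list set \<Rightarrow> bool" where
  "path_partition V E S \<longleftrightarrow> finite S \<and> (\<forall>p\<in>S. is_path E p)
     \<and> (\<forall>p\<in>S. \<forall>q\<in>S. p \<noteq> q \<longrightarrow> set p \<inter> set q = {})
     \<and> (\<Union>p\<in>S. set p) = V"

definition has_spanning_cycle :: "('a \<Rightarrow> 'a \<Rightarrow> bool) \<Rightarrow> 'a set \<Rightarrow> bool" where
  "has_spanning_cycle E A \<longleftrightarrow> (\<exists>q. distinct q \<and> set q = A \<and> 3 \<le> length q
     \<and> (\<forall>i. Suc i < length q \<longrightarrow> E (q ! i) (q ! Suc i)) \<and> E (last q) (hd q))"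

definition cycle_comp :: "('a \<Rightarrow> 'a \<Rightarrow> bool) \<Rightarrow> 'a list \<Rightarrow> bool" where
  "cycle_comp E p \<longleftrightarrow> 3 \<le> length p \<and> has_spanning_cycle E (set p)"

definition isolated_comp :: "'a list \<Rightarrow> bool" where
  "isolated_comp p \<longleftrightarrow> length p = 1"

definition path_comp :: "('a \<Rightarrow> 'a \<Rightarrow> bool) \<Rightarrow> 'a list \<Rightarrow> bool" where
  "path_comp E p \<longleftrightarrow> \<not> cycle_comp E p \<and> \<not> isolated_comp p"

definition num_cycle_comps :: "('a \<Rightarrow> 'a \<Rightarrow> bool) \<Rightarrow> 'a list set \<Rightarrow> nat" where
  "num_cycle_comps E S = card {p\<in>S. cycle_comp E p}"

definition canonical :: "'a set \<Rightarrow> ('a \<Rightarrow> 'a \<Rightarrow> bool) \<Rightarrow> 'a list set \<Rightarrow> bool" where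
  "canonical V E S \<longleftrightarrow> path_partition V E S
     \<and> (\<forall>S'. path_partition V E S' \<longrightarrow> card S \<le> card S')
     \<and> (\<forall>S'. path_partition V E S' \<and> card S' = card S \<longrightarrow> num_cycle_comps E S' \<le> num_cycle_comps E S)
     \<and> (\<forall>p\<in>S. \<not> isolated_comp p)"

definition path_neighbors :: "('a \<Rightarrow> 'a \<Rightarrow> bool) \<Rightarrow> 'a list set \<Rightarrow> 'a \<Rightarrow> 'a \<Rightarrow> bool" where
  "path_neighbors E S x y \<longleftrightarrow> (\<exists>p\<in>S. path_comp E p \<and>
     (\<exists>i. Suc i < length p \<and> {p ! i, p ! Suc i} = {x, y}))"

definition same_cycle_comp :: "('a \<Rightarrow> 'a \<Rightarrow> bool) \<Rightarrow> 'a list set \<Rightarrow> 'a \<Rightarrow> 'a \<Rightarrow> bool" where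
  "same_cycle_comp E S x y \<longleftrightarrow> (\<exists>p\<in>S. cycle_comp E p \<and> x \<in> set p \<and> y \<in> set p)"

definition free_edge :: "('a \<Rightarrow> 'a \<Rightarrow> bool) \<Rightarrow> 'a list set \<Rightarrow> 'a \<Rightarrow> 'a \<Rightarrow> bool" where
  "free_edge E S x y \<longleftrightarrow> E x y \<and> \<not> path_neighbors E S x y \<and> \<not> same_cycle_comp E S x y"

definition V1 :: "('a \<Rightarrow> 'a \<Rightarrow> bool) \<Rightarrow> 'a list set \<Rightarrow> 'a set" where
  "V1 E S = {v. \<exists>p\<in>S. (path_comp E p \<and> (v = hd p \<or> v = last p)) \<or> (cycle_comp E p \<and> v \<in> set p)}"

definition V2 :: "'a set \<Rightarrow> ('a \<Rightarrow> 'a \<Rightarrow> bool) \<Rightarrow> 'a list set \<Rightarrow> 'a set" where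
  "V2 V E S = {x\<in>V. x \<notin> V1 E S \<and> (\<exists>y\<in>V1 E S. free_edge E S x y)}"

definition goes_to :: "'a set \<Rightarrow> ('a \<Rightarrow> 'a \<Rightarrow> bool) \<Rightarrow> 'a list set \<Rightarrow> 'a \<Rightarrow> 'a \<Rightarrow> bool" where
  "goes_to V E S x y \<longleftrightarrow> x \<in> V2 V E S \<and> y \<in> V1 E S \<and> free_edge E S x y"

end

theory Submission
  imports Defs
begin


lemma is_path_append:
  assumes "is_path E a" "is_path E b" "set a \<inter> set b = {}" "E (last a) (hd b)"
  shows "is_path E (a @ b)"
  unfolding is_path_def
proof (intro conjI allI impI)
  show "a @ b \<noteq> []" using assms(1) by (simp add: is_path_def)
  show "distinct (a @ b)" using assms by (simp add: is_path_def)
  fix j assume j: "Suc j < length (a @ b)"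
  have na: "a \<noteq> []" and nb: "b \<noteq> []" using assms by (auto simp: is_path_def)
  consider "Suc j < length a" | "Suc j = length a" | "length a \<le> j" by linarith
  then show "E ((a @ b) ! j) ((a @ b) ! Suc j)"
  proof cases
    case 1 then show ?thesis using assms(1) by (simp add: nth_append is_path_def)
  next
    case 2
    have jj: "j = length a - 1" using 2 by simp
    have "(a@b) ! j = last a" using 2 na jj by (simp add: nth_append last_conv_nth)
    moreover have "(a@b) ! Suc j = hd b" using 2 nb by (simp add: nth_append hd_conv_nth)
    ultimately show ?thesis using assms(4) by simp
  next
    case 3
    then obtain m where m: "j = length a + m" using le_Suc_ex by blast
    have "Suc m < length b" using j m by simp
    then show ?thesis using assms(2) m by (simp add: nth_append is_path_def)
  qed
qed

lemma is_path_rev: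
  assumes "is_path E p" "\<forall>x y. E x y \<longrightarrow> E y x"
  shows "is_path E (rev p)"
  unfolding is_path_def
proof (intro conjI allI impI)
  show "rev p \<noteq> []" "distinct (rev p)" using assms by (auto simp: is_path_def)
  fix j assume j: "Suc j < length (rev p)"
  define m where "m = length p - Suc (Suc j)"
  have l: "length p - Suc j = Suc m" using j by (simp add: m_def)
  have l2: "length p - Suc (Suc j) = m" by (simp add: m_def)
  have ml: "Suc m < length p" using j by (simp add: m_def)
  have e: "E (p ! m) (p ! Suc m)" using assms(1) ml unfolding is_path_def by blast
  have r1: "rev p ! j = p ! Suc m" using j l by (simp add: rev_nth)
  have r2: "rev p ! Suc j = p ! m" using j l2 by (simp add: rev_nth)
  show "E (rev p ! j) (rev p ! Suc j)" using e assms(2) r1 r2 by simp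
qed

lemma is_path_take:
  assumes "is_path E p" "0 < n"
  shows "is_path E (take n p)"
  using assms unfolding is_path_def by auto

lemma is_path_drop:
  assumes "is_path E p" "n < length p"
  shows "is_path E (drop n p)"
  using assms unfolding is_path_def
  by (auto simp: distinct_drop)

lemma cycle_path_hd:
  assumes "has_spanning_cycle E A" "v \<in> A"
  shows "\<exists>r. is_path E r \<and> set r = A \<and> hd r = v"
proof -
  obtain q where q: "distinct q" "set q = A" "3 \<le> length q"
    "\<forall>i. Suc i < length q \<longrightarrow> E (q ! i) (q ! Suc i)" "E (last q) (hd q)"
    using assms(1) unfolding has_spanning_cycle_def by blast
  obtain k where k: "k < length q" "q ! k = v" using assms(2) q(2) by (metis in_set_conv_nth)
  have pq: "is_path E q" using q unfolding is_path_def by auto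
  have d: "is_path E (drop k q)" using is_path_drop[OF pq k(1)] .
  have hd: "hd (drop k q) = v" using k by (simp add: hd_drop_conv_nth)
  show ?thesis
  proof (cases "k = 0")
    case True then show ?thesis using d hd q(2) by auto
  next
    case False
    have t: "is_path E (take k q)" using is_path_take[OF pq] False by simp
    have disj: "set (drop k q) \<inter> set (take k q) = {}" using q(1)
      by (metis distinct_append append_take_drop_id inf_commute)
    have "E (last (drop k q)) (hd (take k q))" using q(5) k False
      by (simp add: hd_take)
    then have "is_path E (drop k q @ take k q)" using is_path_append[OF d t disj] by simp
    moreover have "set (drop k q @ take k q) = A" using q(2)
      by (metis Un_commute append_take_drop_id set_append)
    moreover have "hd (drop k q @ take k q) = v" using hd k by simp
    ultimately show ?thesis by blast
  qed
qed


lemma replace_contra: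
  assumes can: "canonical V E S" and RS: "R \<subseteq> S" and fN: "finite N" and cN: "card N < card R"
    and pN: "\<forall>p\<in>N. is_path E p"
    and dN: "\<forall>p\<in>N. \<forall>q\<in>N. p \<noteq> q \<longrightarrow> set p \<inter> set q = {}"
    and uN: "(\<Union>p\<in>N. set p) = (\<Union>p\<in>R. set p)"
  shows False
proof -
  have pp: "path_partition V E S" using can by (simp add: canonical_def)
  then have fS: "finite S" and pS: "\<forall>p\<in>S. is_path E p"
    and dS: "\<forall>p\<in>S. \<forall>q\<in>S. p \<noteq> q \<longrightarrow> set p \<inter> set q = {}"
    and uS: "(\<Union>p\<in>S. set p) = V" by (auto simp: path_partition_def)
  let ?S' = "(S - R) \<union> N"
  have "path_partition V E ?S'"
    unfolding path_partition_def
  proof (intro conjI)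
    show "finite ?S'" using fS fN by simp
    show "\<forall>p\<in>?S'. is_path E p"
    proof
      fix p assume "p \<in> ?S'"
      then have "p \<in> S \<or> p \<in> N" by blast
      then show "is_path E p" using pS pN by metis
    qed
    show "\<forall>p\<in>?S'. \<forall>q\<in>?S'. p \<noteq> q \<longrightarrow> set p \<inter> set q = {}"
    proof (intro ballI impI)
      fix p q assume p: "p \<in> ?S'" and q: "q \<in> ?S'" and pq: "p \<noteq> q"
      have X: "set a \<inter> set b = {}" if a: "a \<in> S - R" and b: "b \<in> N" for a b
      proof -
        have "set b \<subseteq> (\<Union>p\<in>R. set p)" using b uN by (metis UN_upper)
        moreover have "\<forall>r\<in>R. set a \<inter> set r = {}"
        proof
          fix r assume r: "r \<in> R"
          then have "a \<noteq> r" using a by auto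
          then show "set a \<inter> set r = {}" using dS a r RS by auto
        qed
        ultimately show ?thesis by auto
      qed
      show "set p \<inter> set q = {}"
      proof (cases "p \<in> N")
        case pN': True
        show ?thesis
        proof (cases "q \<in> N")
          case True then show ?thesis using dN pN' pq by blast
        next
          case False then have "q \<in> S - R" using q by blast
          then show ?thesis using X[of q p] pN' by (simp add: Int_commute)
        qed
      next
        case False then have pS': "p \<in> S - R" using p by blast
        show ?thesis
        proof (cases "q \<in> N")
          case True then show ?thesis using X[of p q] pS' by simp
        next
          case False then have "q \<in> S - R" using q by blast
          then show ?thesis using dS pS' pq by blast
        qed
      qed
    qed
    show "(\<Union>p\<in>?S'. set p) = V"
    proof -
      have "(\<Union>p\<in>?S'. set p) = (\<Union>p\<in>S - R. set p) \<union> (\<Union>p\<in>R. set p)" using uN by simp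
      also have "\<dots> = (\<Union>p\<in>S. set p)" using RS by auto
      finally show ?thesis using uS by simp
    qed
  qed
  moreover have "\<forall>S'. path_partition V E S' \<longrightarrow> card S \<le> card S'"
    using can unfolding canonical_def by blast
  ultimately have "card S \<le> card ?S'" by blast
  moreover have "card ?S' \<le> card (S - R) + card N" by (rule card_Un_le)
  moreover have "card (S - R) = card S - card R" using RS fS
    by (meson card_Diff_subset finite_subset)
  moreover have "card R \<le> card S" using RS fS by (simp add: card_mono)
  ultimately show False using cN by linarith
qed

theorem mainTheorem8:
  fixes V :: "'a set" and E :: "'a \<Rightarrow> 'a \<Rightarrow> bool" and S :: "'a list set"
    and P C :: "'a list" and i :: nat and c :: 'a
  assumes "simple_graph V E"
    and "regular 6 V E"
    and "canonical V E S"
    and "P \<in> S \<or> rev P \<in> S"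
    and "path_comp E P"
    and "Suc i < length P"
    and "P ! i \<in> V2 V E S" and "P ! Suc i \<in> V2 V E S"
    and "C \<in> S" and "cycle_comp E C"
    and "c \<in> set C" and "goes_to V E S (P ! i) c"
  shows "\<forall>y. goes_to V E S (P ! Suc i) y \<longrightarrow> y = last P \<or> y \<in> set C"
proof (intro allI impI)
  fix y assume gy: "goes_to V E S (P ! Suc i) y"
  have sym: "\<forall>x y. E x y \<longrightarrow> E y x" using assms(1) by (simp add: simple_graph_def)
  have can: "canonical V E S" by fact
  have pp: "path_partition V E S" using can by (simp add: canonical_def)
  then have pS: "\<forall>p\<in>S. is_path E p"
    and dS: "\<forall>p\<in>S. \<forall>q\<in>S. p \<noteq> q \<longrightarrow> set p \<inter> set q = {}"
    by (auto simp: path_partition_def)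
  obtain Pr where Pr: "Pr \<in> S" "Pr = P \<or> Pr = rev P" using assms(4) by blast
  have setPr: "set Pr = set P" using Pr(2) by auto
  have pcPr: "path_comp E Pr" using Pr(2) assms(5)
    by (auto simp: path_comp_def cycle_comp_def isolated_comp_def)
  have isP: "is_path E P"
    using Pr pS is_path_rev[OF _ sym] by (metis rev_rev_ident)
  have PrC: "Pr \<noteq> C" using pcPr assms(10) by (auto simp: path_comp_def)
  have disjPC: "set P \<inter> set C = {}" using dS Pr(1) assms(9) PrC setPr by metis
  obtain Cr where Cr: "is_path E Cr" "set Cr = set C" "hd Cr = c"
    using cycle_path_hd[of E "set C" c] assms(10,11) by (auto simp: cycle_comp_def)
  have E1: "E (P ! i) c" using assms(12) by (simp add: goes_to_def free_edge_def)
  have E2: "E (P ! Suc i) y" using gy by (simp add: goes_to_def free_edge_def)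
  have yV1: "y \<in> V1 E S" using gy by (simp add: goes_to_def)
  show "y = last P \<or> y \<in> set C"
  proof (rule ccontr)
    assume ny: "\<not> (y = last P \<or> y \<in> set C)"
    define A where "A = take (Suc i) P"
    define B where "B = drop (Suc i) P"
    have iA: "is_path E A" unfolding A_def using is_path_take[OF isP] by simp
    have iB: "is_path E B" unfolding B_def using is_path_drop[OF isP] assms(6) by simp
    have lA: "last A = P ! i" unfolding A_def using assms(6)
      by (subst last_conv_nth) (auto simp: min_def)
    have hB: "hd B = P ! Suc i" unfolding B_def using assms(6) by (simp add: hd_drop_conv_nth)
    have hA: "hd A = hd P" unfolding A_def by simp
    have dAB: "set A \<inter> set B = {}" unfolding A_def B_def using isP
      by (metis distinct_append append_take_drop_id is_path_def)
    have uAB: "set A \<union> set B = set P" unfolding A_def B_def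
      by (metis append_take_drop_id set_append)
    have iAC: "is_path E (A @ Cr)"
    proof (rule is_path_append[OF iA Cr(1)])
      show "set A \<inter> set Cr = {}" using Cr(2) disjPC uAB by auto
      show "E (last A) (hd Cr)" using lA Cr(3) E1 by simp
    qed
    have "y = hd P \<or> (\<exists>D D'. D \<in> S \<and> D \<noteq> Pr \<and> D \<noteq> C \<and> is_path E D' \<and> set D' = set D \<and> last D' = y)"
    proof -
      obtain p where p: "p \<in> S" "(path_comp E p \<and> (y = hd p \<or> y = last p)) \<or> (cycle_comp E p \<and> y \<in> set p)"
        using yV1 by (auto simp: V1_def)
      show ?thesis
      proof (cases "p = Pr")
        case True
        then have "y = hd Pr \<or> y = last Pr" using p(2) pcPr by (auto simp: path_comp_def)
        moreover have "P \<noteq> []" using assms(6) by auto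
        ultimately have "y = hd P" using Pr(2) ny
          by (auto simp: hd_rev last_rev)
        then show ?thesis by blast
      next
        case False
        show ?thesis
        proof (cases "path_comp E p \<and> (y = hd p \<or> y = last p)")
          case True
          have pC: "p \<noteq> C" using True assms(10) by (auto simp: path_comp_def)
          have ip: "is_path E p" using pS p(1) by blast
          let ?D' = "if y = last p then p else rev p"
          have "is_path E ?D'" using ip is_path_rev[OF ip sym] by simp
          moreover have "set ?D' = set p" by simp
          moreover have "last ?D' = y"
          proof -
            have "p \<noteq> []" using ip by (simp add: is_path_def)
            then show ?thesis using True by (auto simp: last_rev)
          qed
          ultimately show ?thesis using p(1) False pC by blast
        next
          case c2: False
          then have cp: "cycle_comp E p" "y \<in> set p" using p(2) by auto
          have pC: "p \<noteq> C" using cp ny by auto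
          obtain r where r: "is_path E r" "set r = set p" "hd r = y"
            using cycle_path_hd[of E "set p" y] cp by (auto simp: cycle_comp_def)
          have "is_path E (rev r)" using is_path_rev[OF r(1) sym] .
          moreover have "set (rev r) = set p" using r by simp
          moreover have "last (rev r) = y"
          proof -
            have "r \<noteq> []" using r(1) by (simp add: is_path_def)
            then show ?thesis using r(3) by (simp add: last_rev)
          qed
          ultimately show ?thesis using p(1) False pC by blast
        qed
      qed
    qed
    then show False
    proof
      assume yh: "y = hd P"
      let ?N = "{rev B @ A @ Cr}"
      have "is_path E (rev B @ A @ Cr)"
      proof (rule is_path_append[OF is_path_rev[OF iB sym] iAC])
        show "set (rev B) \<inter> set (A @ Cr) = {}" using dAB disjPC uAB Cr(2) by auto
        have "last (rev B) = P ! Suc i" using hB iB by (auto simp: last_rev is_path_def)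
        moreover have "hd (A @ Cr) = y" using hA yh iA by (auto simp: is_path_def)
        ultimately show "E (last (rev B)) (hd (A @ Cr))" using E2 by simp
      qed
      moreover have "(\<Union>p\<in>?N. set p) = (\<Union>p\<in>{Pr, C}. set p)"
        using uAB setPr Cr(2) by auto
      moreover have "card ?N < card {Pr, C}" using PrC by simp
      ultimately show False
        using replace_contra[OF can, of "{Pr, C}" ?N] Pr(1) assms(9) by auto
    next
      assume "\<exists>D D'. D \<in> S \<and> D \<noteq> Pr \<and> D \<noteq> C \<and> is_path E D' \<and> set D' = set D \<and> last D' = y"
      then obtain D D' where D: "D \<in> S" "D \<noteq> Pr" "D \<noteq> C" "is_path E D'" "set D' = set D" "last D' = y"
        by blast
      have dDP: "set D \<inter> set P = {}" using dS D(1,2) Pr(1) setPr by metis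
      have dDC: "set D \<inter> set C = {}" using dS D(1,3) assms(9) by metis
      have iDB: "is_path E (D' @ B)"
      proof (rule is_path_append[OF D(4) iB])
        show "set D' \<inter> set B = {}" using D(5) dDP uAB by auto
        show "E (last D') (hd B)" using D(6) hB E2 sym by simp
      qed
      let ?N = "{A @ Cr, D' @ B}"
      have "\<forall>p\<in>?N. is_path E p" using iAC iDB by simp
      moreover have "\<forall>p\<in>?N. \<forall>q\<in>?N. p \<noteq> q \<longrightarrow> set p \<inter> set q = {}"
        using dDP dDC disjPC dAB uAB Cr(2) D(5) by auto
      moreover have "(\<Union>p\<in>?N. set p) = (\<Union>p\<in>{Pr, C, D}. set p)"
        using uAB setPr Cr(2) D(5) by auto
      moreover have "card ?N < card {Pr, C, D}"
      proof -
        have "card ?N \<le> 2" by (simp add: card_insert_le_m1)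
        moreover have "card {Pr, C, D} = 3" using PrC D(2,3) by auto
        ultimately show ?thesis by linarith
      qed
      ultimately show False
        using replace_contra[OF can, of "{Pr, C, D}" ?N] Pr(1) assms(9) D(1) by auto
    qed
  qed
qed

end
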